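(* Let $\{U_N(i)\}_{i=1}^{M_N}$, $N\ge1$, be a triangular array and $\{\mathcal F_N\}$ a filtration as described. Assume there exist nonnegative random variables $V_N,X_N,Y_N$ such that (i) $\max_{i\le M_N}|U_N(i)|\le V_N+X_NY_N^2$ a.s. for all $N$; (ii) $V_N$ and $X_N$ are $\mathcal F_N$-measurable, $V_N\to0$ in probability, and $\lim_{\lambda\to\infty}\sup_N\mathbb P(X_N\ge\lambda)=0$; (iii) for some $\alpha\in\{1,2\}$, $\nu>0$, $c>0$, $C>0$, a.s. for all $y>0$ and $N$, $\mathbb P(Y_N\ge y\mid\mathcal F_N)\le CM_N\exp(-cM_N^{\nu}y^{2\alpha})$. Then for $p\in\{1,2\}$: if $\lim_{\lambda\to\infty}\sup_N\mathbb P\big(\sum_{i=1}^{M_N}\mathbb E[|U_N(i)|^p\mid\mathcal F_N]\ge\lambda\big)=0$, then for every $\varepsilon>0$, $$\sum_{i=1}^{M_N}\mathbb E\big[|U_N(i)|^p\mathbf 1\{|U_N(i)|\ge\varepsilon\}\mid\mathcal F_N\big]\to0\quad\text{in probability as }N\to\infty.$$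
   Context: $(\Omega,\mathcal A,\{\mathcal F_N\}_{N\ge0},\mathbb P)$ is a filtered probability space and $\{M_N\}$ a sequence of positive integers with $M_N\to\infty$. For each $N$, $U_N(1),\dots,U_N(M_N)$ are real random variables that are conditionally independent given $\mathcal F_N$ with $\mathbb E[|U_N(i)|\mid\mathcal F_N]<\infty$ a.s. (and $\mathbb E[U_N(i)^2\mid\mathcal F_N]<\infty$ a.s. when $p=2$). *)

theory Defs
  imports "HOL-Probability.Probability"
begin

text \<open>Conditional expectation of a nonnegative random variable given a sub-sigma-algebra F
  is the library's nn_cond_exp (ennreal-valued, so it is defined for non-integrable variables).\<close>

definition cond_prob :: "'a measure \<Rightarrow> 'a measure \<Rightarrow> 'a set \<Rightarrow> 'a \<Rightarrow> ennreal" where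
  "cond_prob M F A = nn_cond_exp M F (indicator A)"

definition cond_indep_vars ::
  "'a measure \<Rightarrow> 'a measure \<Rightarrow> ('i \<Rightarrow> 'a \<Rightarrow> real) \<Rightarrow> 'i set \<Rightarrow> bool" where
  "cond_indep_vars M F Z I \<longleftrightarrow>
     (\<forall>i\<in>I. Z i \<in> borel_measurable M) \<and>
     (\<forall>J B. finite J \<and> J \<subseteq> I \<and> (\<forall>j\<in>J. B j \<in> sets borel) \<longrightarrow>
        (AE x in M. cond_prob M F {\<omega>\<in>space M. \<forall>j\<in>J. Z j \<omega> \<in> B j} x
                    = (\<Prod>j\<in>J. cond_prob M F {\<omega>\<in>space M. Z j \<omega> \<in> B j} x)))"

definition tendsto_prob_zero :: "'a measure \<Rightarrow> (nat \<Rightarrow> 'a \<Rightarrow> real) \<Rightarrow> bool" where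
  "tendsto_prob_zero M Z \<longleftrightarrow>
     (\<forall>e>0. (\<lambda>N. measure M {x\<in>space M. \<bar>Z N x\<bar> > e}) \<longlonglongrightarrow> 0)"

definition tendsto_prob_zero_enn :: "'a measure \<Rightarrow> (nat \<Rightarrow> 'a \<Rightarrow> ennreal) \<Rightarrow> bool" where
  "tendsto_prob_zero_enn M Z \<longleftrightarrow>
     (\<forall>e>0. (\<lambda>N. measure M {x\<in>space M. Z N x > ennreal e}) \<longlonglongrightarrow> 0)"

end

theory Submission
  imports Defs "HOL-Real_Asymp.Real_Asymp"
begin

lemma sfsub:
  assumes "prob_space P" "subalgebra P F"
  shows "sigma_finite_subalgebra P F"
proof -
  interpret prob_space P by fact
  have "finite_measure_subalgebra P F"
    by (simp add: assms(2) finite_measure_axioms finite_measure_subalgebra.intro finite_measure_subalgebra_axioms.intro)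
  then show ?thesis by (rule finite_measure_subalgebra_is_sigma_finite)
qed

lemma tail_emeasure:
  fixes Y :: "'a \<Rightarrow> real"
  assumes prob: "prob_space P" and sub: "subalgebra P F"
    and Ym[measurable]: "Y \<in> borel_measurable P"
    and b: "AE x in P. cond_prob P F {\<omega>\<in>space P. Y \<omega> \<ge> y} x \<le> ennreal b"
  shows "emeasure P {\<omega>\<in>space P. Y \<omega> \<ge> y} \<le> ennreal b"
proof -
  interpret prob_space P by fact
  interpret sigma_finite_subalgebra P F using sfsub[OF prob sub] .
  let ?A = "{\<omega>\<in>space P. Y \<omega> \<ge> y}"
  have Am: "?A \<in> sets P" by measurable
  have "emeasure P ?A = (\<integral>\<^sup>+ x. (\<lambda>_. 1) x * indicator ?A x \<partial>P)"
    using Am by simp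
  also have "\<dots> = (\<integral>\<^sup>+ x. (\<lambda>_. 1) x * nn_cond_exp P F (indicator ?A) x \<partial>P)"
    by (rule nn_cond_exp_intg[symmetric]) (auto intro: borel_measurable_indicator Am)
  also have "\<dots> = (\<integral>\<^sup>+ x. cond_prob P F ?A x \<partial>P)" by (simp add: cond_prob_def)
  also have "\<dots> \<le> (\<integral>\<^sup>+ x. ennreal b \<partial>P)"
    by (rule nn_integral_mono_AE) (use b in auto)
  also have "\<dots> = ennreal b" by (simp add: emeasure_space_1)
  finally show ?thesis .
qed

lemma geo_enn:
  fixes K q :: real
  assumes "K \<ge> 0" "0 \<le> q" "q \<le> 1/2"
  shows "(\<Sum>k. ennreal (K * q^(k+1))) \<le> ennreal (2*K*q)"
proof -
  have sq: "summable (\<lambda>k. q^k)" using assms by (intro summable_geometric) auto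
  have s: "summable (\<lambda>k. K * q^(k+1))"
    using summable_mult[OF sq, of "K*q"] by (simp add: algebra_simps)
  have "(\<Sum>k. ennreal (K * q^(k+1))) = ennreal (\<Sum>k. K * q^(k+1))"
    using assms s by (intro suminf_ennreal2) auto
  also have "(\<Sum>k. K * q^(k+1)) = K*q * (\<Sum>k. q^k)"
    using suminf_mult[OF sq, of "K*q"] by (simp add: algebra_simps)
  also have "(\<Sum>k. q^k) = 1/(1-q)" using assms by (intro suminf_geometric) auto
  also have "K*q*(1/(1-q)) \<le> 2*K*q"
  proof -
    have "1/(1-q) \<le> 2" using assms by (simp add: field_simps)
    then have "K*q*(1/(1-q)) \<le> K*q*2" using assms by (intro mult_left_mono) auto
    then show ?thesis by simp
  qed
  finally show ?thesis by (simp add: ennreal_leI)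
qed

lemma pow_floor:
  fixes w :: real
  assumes "w \<ge> 1" "p \<le> (2::nat)"
  shows "w^p \<le> 4^(nat \<lfloor>w\<rfloor>)" "nat \<lfloor>w\<rfloor> \<ge> 1" "real (nat \<lfloor>w\<rfloor>) \<le> w"
proof -
  define n where "n = nat \<lfloor>w\<rfloor>"
  have n1: "n \<ge> 1" using assms unfolding n_def by linarith
  have nw: "real n \<le> w" "w < real n + 1" using assms unfolding n_def by linarith+
  have "w^p \<le> (real n + 1)^p" using nw assms by (intro power_mono) auto
  also have "\<dots> \<le> (real n + 1)^2" using assms by (intro power_increasing) auto
  also have "(real n + 1)^2 \<le> 4^n"
  proof -
    have "\<And>m::nat. m \<ge> 1 \<Longrightarrow> (real m + 1)^2 \<le> 4^m"
    proof -
      fix m :: nat assume "m \<ge> 1"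
      then show "(real m + 1)^2 \<le> 4^m"
      proof (induction m rule: dec_induct)
        case base then show ?case by simp
      next
        case (step m)
        have "(real (Suc m) + 1)^2 \<le> 4 * (real m + 1)^2" using step(1) by (simp add: power2_eq_square algebra_simps)
        also have "\<dots> \<le> 4 * 4^m" using step by simp
        finally show ?case by simp
      qed
    qed
    then show ?thesis using n1 by blast
  qed
  finally show "w^p \<le> 4^(nat \<lfloor>w\<rfloor>)" "nat \<lfloor>w\<rfloor> \<ge> 1" "real (nat \<lfloor>w\<rfloor>) \<le> w"
    using n1 nw unfolding n_def by auto
qed

lemma key:
  fixes P F :: "'a measure" and M :: nat and U :: "nat \<Rightarrow> 'a \<Rightarrow> real"
    and V X Y :: "'a \<Rightarrow> real" and \<alpha> p :: nat and \<nu> c C \<epsilon> L \<eta> r :: real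
  assumes prob: "prob_space P" and sub: "subalgebra P F"
    and Um: "\<And>i. i \<in> {1..M} \<Longrightarrow> U i \<in> borel_measurable P"
    and Vm[measurable]: "V \<in> borel_measurable F"
    and Xm[measurable]: "X \<in> borel_measurable F"
    and Ym[measurable]: "Y \<in> borel_measurable P"
    and Ynn: "\<And>x. x \<in> space P \<Longrightarrow> Y x \<ge> 0"
    and Mpos: "M > 0"
    and bound: "AE x in P. Max ((\<lambda>i. \<bar>U i x\<bar>) ` {1..M}) \<le> V x + X x * (Y x)\<^sup>2"
    and Y_tail: "\<And>y. y > 0 \<Longrightarrow>
        AE x in P. cond_prob P F {\<omega>\<in>space P. Y \<omega> \<ge> y} x
           \<le> ennreal (C * real M * exp (- c * real M powr \<nu> * y ^ (2 * \<alpha>)))"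
    and alpha: "\<alpha> \<ge> 1" and p: "p \<le> 2" and c: "c > 0" and Cpos: "C > 0"
    and eps: "\<epsilon> > 0" and lam: "L > 0" and eta: "\<eta> > 0"
    and r_def: "r = exp (- c * real M powr \<nu> * (\<epsilon>/(2*L))^\<alpha>)" and r8: "r \<le> 1/8"
  shows "measure P {x\<in>space P. (\<Sum>i\<in>{1..M}. nn_cond_exp P F
              (\<lambda>\<omega>. ennreal (\<bar>U i \<omega>\<bar> ^ p * indicator {\<omega>'. \<bar>U i \<omega>'\<bar> \<ge> \<epsilon>} \<omega>)) x) > ennreal \<eta>}
     \<le> measure P {x\<in>space P. V x \<ge> \<epsilon>/2} + measure P {x\<in>space P. X x \<ge> L}
        + 8*C*(real M)^2 * \<epsilon>^p * r / \<eta>"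
proof -
  interpret prob_space P by fact
  interpret sigma_finite_subalgebra P F using sfsub[OF prob sub] .
  have subP: "\<And>A. A \<in> sets F \<Longrightarrow> A \<in> sets P" using sub unfolding subalgebra_def by auto
  have [measurable]: "V \<in> borel_measurable P" "X \<in> borel_measurable P"
    using measurable_from_subalg[OF sub Vm] measurable_from_subalg[OF sub Xm] by auto
  define \<delta> where "\<delta> = \<epsilon>/(2*L)"
  have dpos: "\<delta> > 0" using eps lam by (simp add: \<delta>_def)
  define f where "f i \<omega> = ennreal (\<bar>U i \<omega>\<bar> ^ p * indicator {\<omega>'. \<bar>U i \<omega>'\<bar> \<ge> \<epsilon>} \<omega>)" for i \<omega>
  have f_alt: "f i \<omega> = ennreal (if \<bar>U i \<omega>\<bar> \<ge> \<epsilon> then \<bar>U i \<omega>\<bar> ^ p else 0)" for i \<omega>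
    by (simp add: f_def indicator_def)
  have fm: "f i \<in> borel_measurable P" if i: "i \<in> {1..M}" for i
  proof -
    note Um[OF i, measurable]
    show ?thesis unfolding f_alt by measurable
  qed
  define S where "S x = (\<Sum>i\<in>{1..M}. nn_cond_exp P F (f i) x)" for x
  have Sm[measurable]: "S \<in> borel_measurable P" unfolding S_def by measurable
  define G where "G = {x\<in>space P. V x < \<epsilon>/2 \<and> X x < L}"
  have GF: "G \<in> sets F"
  proof -
    have "space F = space P" using sub unfolding subalgebra_def by auto
    then have "G = {x\<in>space F. V x < \<epsilon>/2 \<and> X x < L}" unfolding G_def by simp
    also have "\<dots> \<in> sets F" by measurable
    finally show ?thesis .
  qed
  have GP[measurable]: "G \<in> sets P" using subP[OF GF] .
  define E where "E k = {x\<in>space P. \<delta>*(real k+1) \<le> (Y x)\<^sup>2}" for k :: nat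
  have Em[measurable]: "E k \<in> sets P" for k unfolding E_def by measurable
  define H where "H x = (\<Sum>k. ennreal (4^(k+1)) * indicator (E k) x)" for x
  have Hm[measurable]: "H \<in> borel_measurable P" unfolding H_def by measurable
  have pw: "AE x in P. \<forall>i\<in>{1..M}. indicator G x * f i x \<le> ennreal (\<epsilon>^p) * H x"
    using bound
  proof eventually_elim
    case (elim x)
    show ?case
    proof
      fix i assume i: "i \<in> {1..M}"
      show "indicator G x * f i x \<le> ennreal (\<epsilon>^p) * H x"
      proof (cases "x \<in> G \<and> \<bar>U i x\<bar> \<ge> \<epsilon>")
        case False
        then have "indicator G x * f i x = 0" by (cases "x \<in> G") (auto simp: f_alt)
        then show ?thesis by (metis zero_le)
      next
        case True
        then have xs: "x \<in> space P" and V: "V x < \<epsilon>/2" and X: "X x < L" and Ui: "\<bar>U i x\<bar> \<ge> \<epsilon>"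
          unfolding G_def by auto
        have "\<bar>U i x\<bar> \<le> Max ((\<lambda>i. \<bar>U i x\<bar>) ` {1..M})" using i by (intro Max_ge) auto
        then have Ub: "\<bar>U i x\<bar> \<le> V x + X x * (Y x)\<^sup>2" using elim by linarith
        have "X x * (Y x)\<^sup>2 \<le> L * (Y x)\<^sup>2" using X by (intro mult_right_mono) auto
        then have LY: "L * (Y x)\<^sup>2 > \<epsilon>/2" using Ub Ui V by linarith
        define w where "w = (Y x)\<^sup>2 / \<delta>"
        have ww: "\<epsilon> * w = 2 * L * (Y x)\<^sup>2" using eps lam unfolding w_def \<delta>_def by (simp add: field_simps)
        have w1: "w \<ge> 1" using LY eps ww 
        proof -
          have "\<epsilon> * w > \<epsilon> * 1" using LY ww by linarith
          then show ?thesis using eps by simp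
        qed
        have Uw: "\<bar>U i x\<bar> \<le> \<epsilon> * w" using Ub V LY \<open>X x * (Y x)\<^sup>2 \<le> L * (Y x)\<^sup>2\<close> ww by linarith
        define n where "n = nat \<lfloor>w\<rfloor>"
        have n: "w^p \<le> 4^n" "n \<ge> 1" "real n \<le> w" using pow_floor[OF w1 p] unfolding n_def by auto
        have "\<bar>U i x\<bar>^p \<le> (\<epsilon> * w)^p" using Uw by (intro power_mono) auto
        also have "\<dots> = \<epsilon>^p * w^p" by (simp add: power_mult_distrib)
        also have "\<dots> \<le> \<epsilon>^p * 4^n" using n eps by (intro mult_left_mono) auto
        finally have U4: "\<bar>U i x\<bar>^p \<le> \<epsilon>^p * 4^n" .
        have xE: "x \<in> E (n-1)"
        proof -
          have "\<delta> * (real (n-1) + 1) = \<delta> * real n" using n by (simp add: of_nat_diff)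
          also have "\<dots> \<le> \<delta> * w" using n dpos by (intro mult_left_mono) auto
          also have "\<delta> * w = (Y x)\<^sup>2" using dpos unfolding w_def by simp
          finally show ?thesis unfolding E_def using xs by auto
        qed
        have "ennreal (4^n) = ennreal (4^((n-1)+1)) * indicator (E (n-1)) x"
          using xE n by simp
        also have "\<dots> \<le> H x" unfolding H_def
          using sum_le_suminf[OF summableI, of "{n-1}" "\<lambda>k. ennreal (4^(k+1)) * indicator (E k) x"]
          by (simp only: sum.insert_if finite.emptyI sum.empty empty_iff if_False add_0_right) (meson finite.emptyI finite.insertI zero_le)
        finally have H4: "ennreal (4^n) \<le> H x" .
        have "indicator G x * f i x = ennreal (\<bar>U i x\<bar>^p)" using True by (simp add: f_alt)
        also have "\<dots> \<le> ennreal (\<epsilon>^p * 4^n)" using U4 by (rule ennreal_leI)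
        also have "\<dots> = ennreal (\<epsilon>^p) * ennreal (4^n)" using eps by (simp add: ennreal_mult)
        also have "\<dots> \<le> ennreal (\<epsilon>^p) * H x" using H4 by (intro mult_left_mono) auto
        finally show ?thesis .
      qed
    qed
  qed
  have GFm: "indicator G \<in> borel_measurable F" using GF by (rule borel_measurable_indicator)
  have intS: "(\<integral>\<^sup>+x. S x * indicator G x \<partial>P) \<le> of_nat M * (ennreal (\<epsilon>^p) * (\<integral>\<^sup>+x. H x \<partial>P))"
  proof -
    have "(\<lambda>x. S x * indicator G x) = (\<lambda>x. \<Sum>i\<in>{1..M}. indicator G x * nn_cond_exp P F (f i) x)"
      unfolding S_def by (rule ext) (simp only: sum_distrib_right sum_distrib_left mult.commute)
    then have "(\<integral>\<^sup>+x. S x * indicator G x \<partial>P) = (\<integral>\<^sup>+x. (\<Sum>i\<in>{1..M}. indicator G x * nn_cond_exp P F (f i) x) \<partial>P)"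
      by (rule arg_cong)
    also have "\<dots> = (\<Sum>i\<in>{1..M}. \<integral>\<^sup>+x. indicator G x * nn_cond_exp P F (f i) x \<partial>P)"
      by (rule nn_integral_sum) (use GP in measurable)
    also have "\<dots> = (\<Sum>i\<in>{1..M}. \<integral>\<^sup>+x. indicator G x * f i x \<partial>P)"
      by (intro sum.cong refl nn_cond_exp_intg GFm fm) assumption
    also have "\<dots> \<le> (\<Sum>i\<in>{1..M}. \<integral>\<^sup>+x. ennreal (\<epsilon>^p) * H x \<partial>P)"
    proof (intro sum_mono nn_integral_mono_AE)
      fix i assume "i \<in> {1..M}"
      then show "AE x in P. indicator G x * f i x \<le> ennreal (\<epsilon>^p) * H x" using pw by (auto elim!: AE_mp)
    qed
    also have "\<dots> = of_nat M * (ennreal (\<epsilon>^p) * (\<integral>\<^sup>+x. H x \<partial>P))"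
      by (simp add: nn_integral_cmult)
    finally show ?thesis .
  qed
  have r0: "r \<ge> 0" using r_def by simp
  have EY: "emeasure P (E k) \<le> ennreal (C * real M * r^(k+1))" for k
  proof -
    define y where "y = sqrt (\<delta>*(real k+1))"
    have ypos: "y > 0" using dpos unfolding y_def by simp
    have "E k = {\<omega>\<in>space P. Y \<omega> \<ge> y}"
    proof -
      have "\<delta>*(real k+1) \<le> (Y \<omega>)\<^sup>2 \<longleftrightarrow> y \<le> Y \<omega>" if "\<omega> \<in> space P" for \<omega>
      proof -
        have "y \<le> Y \<omega> \<longleftrightarrow> sqrt (\<delta>*(real k+1)) \<le> sqrt ((Y \<omega>)\<^sup>2)"
          using Ynn[OF that] unfolding y_def by simp
        also have "\<dots> \<longleftrightarrow> \<delta>*(real k+1) \<le> (Y \<omega>)\<^sup>2" by (rule real_sqrt_le_iff)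
        finally show ?thesis by simp
      qed
      then show ?thesis unfolding E_def by auto
    qed
    then have "emeasure P (E k) \<le> ennreal (C * real M * exp (- c * real M powr \<nu> * y ^ (2 * \<alpha>)))"
      using tail_emeasure[OF prob sub Ym Y_tail[OF ypos]] by simp
    also have "\<dots> \<le> ennreal (C * real M * r^(k+1))"
    proof (intro ennreal_leI mult_left_mono)
      have "y ^ (2*\<alpha>) = (y^2)^\<alpha>" by (simp add: power_mult)
      also have "y^2 = \<delta>*(real k+1)" using dpos unfolding y_def by simp
      also have "(\<delta>*(real k+1))^\<alpha> = \<delta>^\<alpha> * (real k+1)^\<alpha>" by (simp add: power_mult_distrib)
      finally have yeq: "y ^ (2*\<alpha>) = \<delta>^\<alpha> * (real k+1)^\<alpha>" .
      have "(real k+1)^1 \<le> (real k+1)^\<alpha>" using alpha by (intro power_increasing) auto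
      then have "\<delta>^\<alpha> * (real k+1) \<le> y ^ (2*\<alpha>)" unfolding yeq using dpos by (intro mult_left_mono) auto
      moreover have "c * real M powr \<nu> \<ge> 0" using c by simp
      ultimately have "c * real M powr \<nu> * (\<delta>^\<alpha> * (real k+1)) \<le> c * real M powr \<nu> * y ^ (2*\<alpha>)"
        by (intro mult_left_mono)
      then have "exp (- c * real M powr \<nu> * y ^ (2 * \<alpha>)) \<le> exp (real (Suc k) * (- c * real M powr \<nu> * \<delta>^\<alpha>))"
        by (simp add: algebra_simps)
      also have "\<dots> = r^(k+1)" unfolding exp_of_nat_mult r_def \<delta>_def by simp
      finally show "exp (- c * real M powr \<nu> * y ^ (2 * \<alpha>)) \<le> r^(k+1)" .
      show "0 \<le> C * real M" using Cpos by simp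
    qed
    finally show ?thesis .
  qed
  have intH: "(\<integral>\<^sup>+x. H x \<partial>P) \<le> ennreal (8 * C * real M * r)"
  proof -
    have "(\<integral>\<^sup>+x. H x \<partial>P) = (\<Sum>k. \<integral>\<^sup>+x. ennreal (4^(k+1)) * indicator (E k) x \<partial>P)"
      unfolding H_def by (rule nn_integral_suminf) measurable
    also have "\<dots> = (\<Sum>k. ennreal (4^(k+1)) * emeasure P (E k))"
      by (simp add: nn_integral_cmult_indicator)
    also have "\<dots> \<le> (\<Sum>k. ennreal (C * real M * (4*r)^(k+1)))"
    proof (intro suminf_le summableI)
      fix k
      have "ennreal (4^(k+1)) * emeasure P (E k) \<le> ennreal (4^(k+1)) * ennreal (C * real M * r^(k+1))"
        using EY by (intro mult_left_mono) auto
      also have "\<dots> = ennreal (C * real M * (4*r)^(k+1))"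
        using Cpos r0 by (simp add: ennreal_mult'' power_mult_distrib mult_ac)
      finally show "ennreal (4^(k+1)) * emeasure P (E k) \<le> ennreal (C * real M * (4*r)^(k+1))" .
    qed
    also have "\<dots> \<le> ennreal (2 * (C * real M) * (4*r))"
      using Cpos r0 r8 by (intro geo_enn) auto
    also have "2 * (C * real M) * (4*r) = 8 * C * real M * r" by simp
    finally show ?thesis .
  qed
  have intS2: "(\<integral>\<^sup>+x. S x * indicator G x \<partial>P) \<le> ennreal (8*C*(real M)^2 * \<epsilon>^p * r)"
  proof -
    have "of_nat M * (ennreal (\<epsilon>^p) * (\<integral>\<^sup>+x. H x \<partial>P)) \<le> of_nat M * (ennreal (\<epsilon>^p) * ennreal (8 * C * real M * r))"
      using intH by (intro mult_left_mono) auto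
    also have "\<dots> = ennreal (8*C*(real M)^2 * \<epsilon>^p * r)"
      using Cpos r0 eps by (simp add: ennreal_mult'' ennreal_of_nat_eq_real_of_nat power2_eq_square mult_ac)
    finally show ?thesis using intS by simp
  qed
  define A1 where "A1 = {x\<in>G. 1 \<le> ennreal (1/\<eta>) * S x}"
  have A1m: "A1 \<in> sets P" unfolding A1_def using GP by measurable
  have "emeasure P A1 \<le> ennreal (1/\<eta>) * (\<integral>\<^sup>+x. S x * indicator G x \<partial>P)"
    unfolding A1_def by (rule nn_integral_Markov_inequality) (auto simp: GP)
  also have "\<dots> \<le> ennreal (1/\<eta>) * ennreal (8*C*(real M)^2 * \<epsilon>^p * r)"
    using intS2 by (intro mult_left_mono) auto
  also have "\<dots> = ennreal (8*C*(real M)^2 * \<epsilon>^p * r / \<eta>)"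
    using eta Cpos r0 eps by (subst ennreal_mult[symmetric]) auto
  finally have mA1: "measure P A1 \<le> 8*C*(real M)^2 * \<epsilon>^p * r / \<eta>"
    using Cpos r0 eps eta by (simp add: emeasure_eq_measure ennreal_le_iff)
  define A2 where "A2 = {x\<in>space P. V x \<ge> \<epsilon>/2}"
  define A3 where "A3 = {x\<in>space P. X x \<ge> L}"
  have A2m: "A2 \<in> sets P" "A3 \<in> sets P" unfolding A2_def A3_def by measurable
  have sub1: "{x\<in>space P. S x > ennreal \<eta>} \<subseteq> A1 \<union> (A2 \<union> A3)"
  proof
    fix x assume x: "x \<in> {x\<in>space P. S x > ennreal \<eta>}"
    show "x \<in> A1 \<union> (A2 \<union> A3)"
    proof (cases "x \<in> G")
      case True
      have "1 = ennreal (1/\<eta>) * ennreal \<eta>" using eta by (subst ennreal_mult[symmetric]) auto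
      also have "\<dots> \<le> ennreal (1/\<eta>) * S x" using x by (intro mult_left_mono) auto
      finally show ?thesis using True unfolding A1_def by auto
    next
      case False
      then show ?thesis using x unfolding G_def A2_def A3_def by auto
    qed
  qed
  have "measure P {x\<in>space P. S x > ennreal \<eta>} \<le> measure P (A1 \<union> (A2 \<union> A3))"
    using sub1 A1m A2m by (intro finite_measure_mono) auto
  also have "\<dots> \<le> measure P A1 + measure P (A2 \<union> A3)"
    using A1m A2m by (intro measure_Un_le) auto
  also have "\<dots> \<le> measure P A1 + (measure P A2 + measure P A3)"
    using A2m measure_Un_le[of A2 P A3] by simp
  finally show ?thesis using mA1 unfolding S_def f_def A2_def A3_def by linarith
qed

lemma asym:
  fixes a \<nu> :: real
  assumes "\<nu> > 0" "a > 0"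
  shows "((\<lambda>m::real. m^2 * exp (- a * m powr \<nu>)) \<longlongrightarrow> 0) at_top"
    and "((\<lambda>m::real. exp (- a * m powr \<nu>)) \<longlongrightarrow> 0) at_top"
  using assms by real_asymp+

theorem mainTheorem16:
  fixes P :: "'a measure"
    and F :: "nat \<Rightarrow> 'a measure"
    and Msz :: "nat \<Rightarrow> nat"
    and U :: "nat \<Rightarrow> nat \<Rightarrow> 'a \<Rightarrow> real"
    and V X Y :: "nat \<Rightarrow> 'a \<Rightarrow> real"
    and \<alpha> p :: nat
    and \<nu> c C :: real
  assumes prob: "prob_space P"
    and subalg: "\<And>N. subalgebra P (F N)"
    and filtration: "\<And>N. sets (F N) \<subseteq> sets (F (Suc N))"
    and Msz_pos: "\<And>N. Msz N > 0"
    and Msz_lim: "filterlim Msz at_top at_top"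
    and U_indep: "\<And>N. cond_indep_vars P (F N) (U N) {1..Msz N}"
    and U_int: "\<And>N i. i \<in> {1..Msz N} \<Longrightarrow>
                  AE x in P. nn_cond_exp P (F N) (\<lambda>\<omega>. ennreal \<bar>U N i \<omega>\<bar>) x < \<infinity>"
    and U_sq_int: "p = 2 \<Longrightarrow> (\<And>N i. i \<in> {1..Msz N} \<Longrightarrow>
                  AE x in P. nn_cond_exp P (F N) (\<lambda>\<omega>. ennreal ((U N i \<omega>)\<^sup>2)) x < \<infinity>)"
    and V_meas: "\<And>N. V N \<in> borel_measurable (F N)"
    and X_meas: "\<And>N. X N \<in> borel_measurable (F N)"
    and Y_meas: "\<And>N. Y N \<in> borel_measurable P"
    and V_nonneg: "\<And>N x. x \<in> space P \<Longrightarrow> V N x \<ge> 0"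
    and X_nonneg: "\<And>N x. x \<in> space P \<Longrightarrow> X N x \<ge> 0"
    and Y_nonneg: "\<And>N x. x \<in> space P \<Longrightarrow> Y N x \<ge> 0"
    and bound: "\<And>N. AE x in P. Max ((\<lambda>i. \<bar>U N i x\<bar>) ` {1..Msz N}) \<le> V N x + X N x * (Y N x)\<^sup>2"
    and V_lim: "tendsto_prob_zero P V"
    and X_tight: "((\<lambda>t. SUP N. measure P {x\<in>space P. X N x \<ge> t}) \<longlongrightarrow> 0) at_top"
    and alpha: "\<alpha> \<in> {1, 2}"
    and nu: "\<nu> > 0" and c: "c > 0" and Cpos: "C > 0"
    and Y_tail: "\<And>N y. y > 0 \<Longrightarrow>
        AE x in P. cond_prob P (F N) {\<omega>\<in>space P. Y N \<omega> \<ge> y} x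
           \<le> ennreal (C * real (Msz N) * exp (- c * real (Msz N) powr \<nu> * y ^ (2 * \<alpha>)))"
    and p: "p \<in> {1, 2}"
    and sum_tight: "((\<lambda>t. SUP N. measure P {x\<in>space P.
          (\<Sum>i\<in>{1..Msz N}. nn_cond_exp P (F N) (\<lambda>\<omega>. ennreal (\<bar>U N i \<omega>\<bar> ^ p)) x) \<ge> ennreal t})
          \<longlongrightarrow> 0) at_top"
  shows "\<forall>\<epsilon>>0. tendsto_prob_zero_enn P (\<lambda>N x.
           \<Sum>i\<in>{1..Msz N}. nn_cond_exp P (F N)
              (\<lambda>\<omega>. ennreal (\<bar>U N i \<omega>\<bar> ^ p * indicator {\<omega>'. \<bar>U N i \<omega>'\<bar> \<ge> \<epsilon>} \<omega>)) x)"
proof (intro allI impI)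
  fix \<epsilon> :: real assume eps: "\<epsilon> > 0"
  interpret prob_space P by (rule prob)
  define S where "S N x = (\<Sum>i\<in>{1..Msz N}. nn_cond_exp P (F N)
              (\<lambda>\<omega>. ennreal (\<bar>U N i \<omega>\<bar> ^ p * indicator {\<omega>'. \<bar>U N i \<omega>'\<bar> \<ge> \<epsilon>} \<omega>)) x)" for N x
  show "tendsto_prob_zero_enn P S"
    unfolding tendsto_prob_zero_enn_def
  proof (intro allI impI)
    fix \<eta> :: real assume eta: "\<eta> > 0"
    show "(\<lambda>N. measure P {x\<in>space P. S N x > ennreal \<eta>}) \<longlonglongrightarrow> 0"
    proof (rule LIMSEQ_I)
      fix \<gamma> :: real assume gam: "\<gamma> > 0"
      have "\<forall>\<^sub>F t in at_top. (SUP N. measure P {x\<in>space P. X N x \<ge> t}) < \<gamma>/3"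
        by (rule order_tendstoD(2)[OF X_tight]) (use gam in simp)
      then obtain t0 where t0: "\<And>t. t \<ge> t0 \<Longrightarrow> (SUP N. measure P {x\<in>space P. X N x \<ge> t}) < \<gamma>/3"
        by (auto simp: eventually_at_top_linorder)
      define L where "L = max t0 1"
      have L: "L > 0" "L \<ge> t0" unfolding L_def by auto
      have XL: "measure P {x\<in>space P. X N x \<ge> L} < \<gamma>/3" for N
      proof -
        have "measure P {x\<in>space P. X N x \<ge> L} \<le> (SUP N. measure P {x\<in>space P. X N x \<ge> L})"
          by (rule cSUP_upper) (auto intro!: bdd_aboveI[where M=1])
        then show ?thesis using t0[OF L(2)] by linarith
      qed
      have "(\<lambda>N. measure P {x\<in>space P. \<bar>V N x\<bar> > \<epsilon>/4}) \<longlonglongrightarrow> 0"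
        using V_lim eps unfolding tendsto_prob_zero_def by (meson divide_pos_pos zero_less_numeral)
      then have "\<forall>\<^sub>F N in sequentially. measure P {x\<in>space P. \<bar>V N x\<bar> > \<epsilon>/4} < \<gamma>/3"
        by (rule order_tendstoD(2)) (use gam in simp)
      moreover have "measure P {x\<in>space P. V N x \<ge> \<epsilon>/2} \<le> measure P {x\<in>space P. \<bar>V N x\<bar> > \<epsilon>/4}" for N
      proof -
        have [measurable]: "V N \<in> borel_measurable P" using measurable_from_subalg[OF subalg V_meas] .
        show ?thesis using eps by (intro finite_measure_mono) auto
      qed
      ultimately have EV: "\<forall>\<^sub>F N in sequentially. measure P {x\<in>space P. V N x \<ge> \<epsilon>/2} < \<gamma>/3"
        by (elim eventually_mono) (meson le_less_trans)
      define a where "a = c * (\<epsilon>/(2*L))^\<alpha>"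
      have apos: "a > 0" unfolding a_def using c eps L by simp
      have Mr: "filterlim (\<lambda>N. real (Msz N)) at_top sequentially"
        using filterlim_compose[OF filterlim_real_sequentially Msz_lim] by (simp add: o_def)
      have rlim: "(\<lambda>N. exp (- a * real (Msz N) powr \<nu>)) \<longlonglongrightarrow> 0"
        using filterlim_compose[OF asym(2)[OF nu apos] Mr] by (simp add: o_def)
      have glim: "(\<lambda>N. 8*C*\<epsilon>^p/\<eta> * ((real (Msz N))^2 * exp (- a * real (Msz N) powr \<nu>))) \<longlonglongrightarrow> 0"
        using tendsto_mult_right_zero[OF filterlim_compose[OF asym(1)[OF nu apos] Mr], of "8*C*\<epsilon>^p/\<eta>"] by (simp only: o_def)
      have Er: "\<forall>\<^sub>F N in sequentially. exp (- a * real (Msz N) powr \<nu>) < 1/8"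
        by (rule order_tendstoD(2)[OF rlim]) simp
      have Eg: "\<forall>\<^sub>F N in sequentially. 8*C*\<epsilon>^p/\<eta> * ((real (Msz N))^2 * exp (- a * real (Msz N) powr \<nu>)) < \<gamma>/3"
        by (rule order_tendstoD(2)[OF glim]) (use gam in simp)
      have "\<forall>\<^sub>F N in sequentially. measure P {x\<in>space P. S N x > ennreal \<eta>} < \<gamma>"
        using EV Er Eg
      proof eventually_elim
        case (elim N)
        have rdef: "exp (- a * real (Msz N) powr \<nu>) = exp (- c * real (Msz N) powr \<nu> * (\<epsilon>/(2*L))^\<alpha>)"
          unfolding a_def by (simp add: mult_ac)
        have Um: "\<And>i. i \<in> {1..Msz N} \<Longrightarrow> U N i \<in> borel_measurable P"
          using U_indep[of N] unfolding cond_indep_vars_def by auto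
        have al: "\<alpha> \<ge> 1" "p \<le> 2" using alpha p by auto
        have "measure P {x\<in>space P. S N x > ennreal \<eta>}
           \<le> measure P {x\<in>space P. V N x \<ge> \<epsilon>/2} + measure P {x\<in>space P. X N x \<ge> L}
              + 8*C*(real (Msz N))^2 * \<epsilon>^p * exp (- a * real (Msz N) powr \<nu>) / \<eta>"
          unfolding S_def
          by (rule key[OF prob subalg[of N] Um V_meas X_meas Y_meas Y_nonneg Msz_pos bound Y_tail
                al c Cpos eps L(1) eta rdef]) (use elim in auto)
        also have "\<dots> < \<gamma>/3 + \<gamma>/3 + \<gamma>/3"
        proof -
          have "8*C*(real (Msz N))^2 * \<epsilon>^p * exp (- a * real (Msz N) powr \<nu>) / \<eta>
                = 8*C*\<epsilon>^p/\<eta> * ((real (Msz N))^2 * exp (- a * real (Msz N) powr \<nu>))" by simp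
          then show ?thesis using elim XL[of N] by linarith
        qed
        finally show ?case by simp
      qed
      then obtain N0 where "\<And>N. N \<ge> N0 \<Longrightarrow> measure P {x\<in>space P. S N x > ennreal \<eta>} < \<gamma>"
        by (auto simp: eventually_sequentially)
      then show "\<exists>N0. \<forall>N\<ge>N0. norm (measure P {x\<in>space P. S N x > ennreal \<eta>} - 0) < \<gamma>"
        by auto
    qed
  qed
qed

end
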